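(* Let $n\ge3$ and $G=C_n\Box P_2$ (the $n$-prism, with $2n$ vertices). Then $$3+\sqrt{3(2n-1)(2n-3)}\ >\ E(G)=QE(G)\ \ge\ \begin{cases}2n & \text{if } n\equiv0\pmod3,\\[4pt] 6n\cdot\dfrac{\sqrt{2\cos\big(\frac{2\pi\lfloor n/6\rfloor}{n}\big)-1}}{1+\cos\big(\frac{2\pi\lfloor n/6\rfloor}{n}\big)} & \text{if } n\equiv1\text{ or }2\pmod 6,\\[10pt] 6n\cdot\dfrac{\sqrt{1-2\cos\big(\frac{2\pi\lceil n/6\rceil}{n}\big)}}{2-\cos\big(\frac{2\pi\lceil n/6\rceil}{n}\big)} & \text{if } n\equiv4\text{ or }5\pmod6,\end{cases}$$ and equality holds in the right-hand (lower) inequality if and only if $n=4$, i.e. $G=C_4\Box P_2$.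
   Context: All graphs are finite, simple and undirected. $C_n$ is the cycle on $n$ vertices, $P_2=K_2$, and $\Box$ is the Cartesian product of graphs. For a graph $G$ with $N$ vertices and $m$ edges, let $q_1\ge\cdots\ge q_N\ge0$ be the eigenvalues of the signless Laplacian $Q(G)=D(G)+A(G)$ (degree diagonal matrix plus adjacency matrix). The signless Laplacian energy is $QE(G)=\sum_{i=1}^N|q_i-\frac{2m}{N}|$, and the energy is $E(G)=\sum_i|\lambda_i|$ over the eigenvalues $\lambda_i$ of the adjacency matrix. *)

theory Defs
  imports "Jordan_Normal_Form.Char_Poly" "HOL-Library.Multiset"
begin

text \<open>A finite simple graph on the vertex set {0..<N} is given by an edge relation
  E (assumed symmetric and irreflexive where relevant).\<close>

definition adj_mat :: "nat \<Rightarrow> (nat \<Rightarrow> nat \<Rightarrow> bool) \<Rightarrow> real mat" where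
  "adj_mat N E = mat N N (\<lambda>(i,j). if E i j then 1 else 0)"

definition vdeg :: "nat \<Rightarrow> (nat \<Rightarrow> nat \<Rightarrow> bool) \<Rightarrow> nat \<Rightarrow> nat" where
  "vdeg N E i = card {j. j < N \<and> E i j}"

definition deg_mat :: "nat \<Rightarrow> (nat \<Rightarrow> nat \<Rightarrow> bool) \<Rightarrow> real mat" where
  "deg_mat N E = mat N N (\<lambda>(i,j). if i = j then real (vdeg N E i) else 0)"

definition signless_laplacian :: "nat \<Rightarrow> (nat \<Rightarrow> nat \<Rightarrow> bool) \<Rightarrow> real mat" where
  "signless_laplacian N E = deg_mat N E + adj_mat N E"

definition num_edges :: "nat \<Rightarrow> (nat \<Rightarrow> nat \<Rightarrow> bool) \<Rightarrow> nat" where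
  "num_edges N E = card {(i,j). i < j \<and> j < N \<and> E i j}"

definition eigvals :: "real mat \<Rightarrow> complex multiset" where
  "eigvals A = (SOME M. char_poly (map_mat complex_of_real A) = (\<Prod>a\<in>#M. [:- a, 1:]))"

definition graph_energy :: "nat \<Rightarrow> (nat \<Rightarrow> nat \<Rightarrow> bool) \<Rightarrow> real" where
  "graph_energy N E = (\<Sum>\<^sub># (image_mset cmod (eigvals (adj_mat N E))))"

definition signless_laplacian_energy :: "nat \<Rightarrow> (nat \<Rightarrow> nat \<Rightarrow> bool) \<Rightarrow> real" where
  "signless_laplacian_energy N E =
     (\<Sum>\<^sub># (image_mset (\<lambda>q. cmod (q - complex_of_real (2 * real (num_edges N E) / real N)))
        (eigvals (signless_laplacian N E))))"

text \<open>The prism C_n \<box> P_2 on vertices {0..<2n}: vertex k corresponds to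
  (k mod n, k div n) \<in> Z_n \<times> {0,1}.\<close>
definition prism_edge :: "nat \<Rightarrow> nat \<Rightarrow> nat \<Rightarrow> bool" where
  "prism_edge n k l \<longleftrightarrow>
     (k div n = l div n \<and> ((k mod n + 1) mod n = l mod n \<or> (l mod n + 1) mod n = k mod n))
     \<or> (k mod n = l mod n \<and> k div n \<noteq> l div n)"

end

theory Submission
  imports Defs "HOL-Analysis.Complex_Transcendental"
begin


lemma proots_prod_linear: "proots (\<Prod>a\<in>#X. [:- a, 1:]) = (X :: complex multiset)"
proof (induction X)
  case empty then show ?case by simp
next
  case (add x X)
  have nz: "(\<Prod>a\<in>#X. [:- a, 1:]) \<noteq> (0::complex poly)"
    by (auto simp: prod_mset_zero_iff)
  have "proots ([:- x, 1:] * (\<Prod>a\<in>#X. [:- a, 1:])) = proots [:- x, 1:] + proots (\<Prod>a\<in>#X. [:- a, 1:])"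
    by (rule proots_mult) (simp, rule nz)
  also have "proots [:- x, 1:] = {#x#}" using proots_linear_factor[of "- x"] by simp
  finally show ?case using add by simp
qed

lemma eigvals_eqI:
  assumes "char_poly (map_mat complex_of_real A) = (\<Prod>a\<in>#X. [:- a, 1:])"
  shows "eigvals A = X"
proof -
  have ex: "\<exists>M. char_poly (map_mat complex_of_real A) = (\<Prod>a\<in>#M. [:- a, 1:])"
    using assms by blast
  have "char_poly (map_mat complex_of_real A) = (\<Prod>a\<in>#eigvals A. [:- a, 1:])"
    unfolding eigvals_def by (rule someI_ex[OF ex])
  then have "(\<Prod>a\<in>#eigvals A. [:- a, 1:]) = (\<Prod>a\<in>#X. [:- a, 1:])" using assms by simp
  then have "proots (\<Prod>a\<in>#eigvals A. [:- a, 1:]) = proots (\<Prod>a\<in>#X. [:- a, 1:])" by simp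
  then show ?thesis by (simp add: proots_prod_linear)
qed

lemma pml: "(\<Prod>a\<in># mset xs. f a) = (\<Prod>a\<leftarrow>xs. f a)"
  by (induction xs) auto

lemma char_poly_diag:
  fixes M P Q :: "complex mat"
  assumes M: "M \<in> carrier_mat N N" and P: "P \<in> carrier_mat N N" and Q: "Q \<in> carrier_mat N N"
    and PQ: "P * Q = 1\<^sub>m N"
    and MP: "M * P = P * Matrix.mat N N (\<lambda>(i,j). if i = j then mu i else 0)"
  shows "char_poly M = (\<Prod>a\<in># mset (map mu [0..<N]). [:- a, 1:])"
proof -
  define D where "D = Matrix.mat N N (\<lambda>(i,j). if i = j then mu i else (0::complex))"
  have D: "D \<in> carrier_mat N N" unfolding D_def by simp
  have QP: "Q * P = 1\<^sub>m N" by (rule mat_mult_left_right_inverse[OF P Q PQ])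
  have "M = M * (P * Q)" using M PQ by simp
  also have "\<dots> = (M * P) * Q" using M P Q by (simp add: assoc_mult_mat)
  finally have MPDQ: "M = P * D * Q" using MP unfolding D_def by simp
  have "similar_mat M D"
    by (rule similar_matI[of M D P Q N], insert M D P Q PQ QP MPDQ, auto)
  then have "char_poly M = char_poly D" by (rule char_poly_similar)
  also have "char_poly D = (\<Prod> a \<leftarrow> diag_mat D. [:- a, 1:])"
    by (rule char_poly_upper_triangular[OF D], auto simp: upper_triangular_def D_def)
  also have "diag_mat D = map mu [0..<N]"
    unfolding diag_mat_def D_def by (simp add: list_eq_iff_nth_eq)
  finally show ?thesis by (simp only: pml)
qed

definition nxt :: "nat \<Rightarrow> nat \<Rightarrow> nat" where "nxt n a = (if a + 1 = n then 0 else a + 1)"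
definition prv :: "nat \<Rightarrow> nat \<Rightarrow> nat" where "prv n a = (if a = 0 then n - 1 else a - 1)"
definition succv :: "nat \<Rightarrow> nat \<Rightarrow> nat" where "succv n r = (r div n) * n + nxt n (r mod n)"
definition predv :: "nat \<Rightarrow> nat \<Rightarrow> nat" where "predv n r = (r div n) * n + prv n (r mod n)"
definition oppv :: "nat \<Rightarrow> nat \<Rightarrow> nat" where "oppv n r = (1 - r div n) * n + r mod n"

lemma eq_dm:
  fixes n :: nat
  assumes "e < n" "x < n"
  shows "(d*n+e = b*n+x) \<longleftrightarrow> (d = b \<and> e = x)"
proof
  assume h: "d*n+e = b*n+x"
  have "(d*n+e) div n = (b*n+x) div n" using h by simp
  then have "d = b" using assms by simp
  then show "d = b \<and> e = x" using h by simp
qed simp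

lemma nxt_mod: "a < n \<Longrightarrow> (a + 1) mod n = nxt n a"
  unfolding nxt_def by auto

lemma nxt_lt: "a < n \<Longrightarrow> nxt n a < n" unfolding nxt_def by auto
lemma prv_lt: "a < n \<Longrightarrow> prv n a < n" unfolding prv_def by auto

lemma prv_iff: "a < n \<Longrightarrow> e < n \<Longrightarrow> ((e + 1) mod n = a) \<longleftrightarrow> e = prv n a"
proof -
  assume a: "a < n" and e: "e < n"
  have "(e + 1) mod n = nxt n e" using e by (rule nxt_mod)
  then show ?thesis using a e unfolding nxt_def prv_def by auto
qed

lemma prv_mod: "a < n \<Longrightarrow> prv n a = (a + n - 1) mod n"
  unfolding prv_def by (auto simp: le_mod_geq)

lemma nxt_ne_prv: "3 \<le> n \<Longrightarrow> a < n \<Longrightarrow> nxt n a \<noteq> prv n a"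
  unfolding nxt_def prv_def by auto

lemma prism_edge_iff:
  assumes n3: "3 \<le> n" and r: "r < 2*n" and k: "k < 2*n"
  shows "prism_edge n r k \<longleftrightarrow> k = succv n r \<or> k = predv n r \<or> k = oppv n r"
proof -
  have np: "0 < n" using n3 by simp
  define a b d e where "a = r mod n" "b = r div n" "d = k div n" "e = k mod n"
  have a: "a < n" "e < n" using np a_b_d_e_def by auto
  have b: "b < 2" "d < 2" using r k a_b_d_e_def by (auto simp: div_less_iff_less_mult)
  have rr: "r = b*n+a" and kk: "k = d*n+e" using a_b_d_e_def by simp_all
  have "prism_edge n r k \<longleftrightarrow> (d = b \<and> (nxt n a = e \<or> e = prv n a)) \<or> (a = e \<and> b \<noteq> d)"
  proof -
    have h1: "(a+1) mod n = nxt n a" using a by (simp only: nxt_mod)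
    have h2: "((e+1) mod n = a) = (e = prv n a)" using a by (simp only: prv_iff)
    show ?thesis unfolding prism_edge_def a_b_d_e_def[symmetric] h1 h2 by auto
  qed
  also have "\<dots> \<longleftrightarrow> k = succv n r \<or> k = predv n r \<or> k = oppv n r"
  proof -
    have sd: "succv n r div n = b" "succv n r mod n = nxt n a"
      "predv n r div n = b" "predv n r mod n = prv n a"
      "oppv n r div n = 1 - b" "oppv n r mod n = a"
      unfolding succv_def predv_def oppv_def a_b_d_e_def[symmetric]
      using a b nxt_lt[OF a(1)] prv_lt[OF a(1)] by auto
    have eqi: "\<And>x. (k = x) \<longleftrightarrow> (k div n = x div n \<and> k mod n = x mod n)"
      by (metis div_mult_mod_eq)
    have bb: "b = 0 \<or> b = 1" "d = 0 \<or> d = 1" using b by auto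
    show ?thesis unfolding eqi sd a_b_d_e_def[symmetric] using bb by auto
  qed
  finally show ?thesis .
qed

lemma nbr_set:
  assumes n3: "3 \<le> n" and r: "r < 2*n"
  shows "{k. k < 2*n \<and> prism_edge n r k} = {succv n r, predv n r, oppv n r}"
    and "succv n r \<noteq> predv n r" "succv n r \<noteq> oppv n r" "predv n r \<noteq> oppv n r"
    and "succv n r < 2*n" "predv n r < 2*n" "oppv n r < 2*n"
proof -
  have np: "0 < n" using n3 by simp
  have a: "r mod n < n" using np by simp
  have b: "r div n < 2" using r by (auto simp: div_less_iff_less_mult)
  show s1: "succv n r < 2*n" "predv n r < 2*n" "oppv n r < 2*n"
  proof -
    have "r div n = 0 \<or> r div n = 1" using b by auto
    moreover have "r mod n < 2*n" using mod_less_divisor[OF np, of r] by linarith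
    ultimately show "succv n r < 2*n" "predv n r < 2*n" "oppv n r < 2*n"
      unfolding succv_def predv_def oppv_def using nxt_lt[OF a] prv_lt[OF a] by auto
  qed
  show "succv n r \<noteq> predv n r" "succv n r \<noteq> oppv n r" "predv n r \<noteq> oppv n r"
  proof -
    have "r div n = 0 \<or> r div n = 1" using b by auto
    then have hb: "r div n \<noteq> 1 - r div n" by auto
    show "succv n r \<noteq> predv n r" "succv n r \<noteq> oppv n r" "predv n r \<noteq> oppv n r"
    unfolding succv_def predv_def oppv_def using a hb nxt_lt[OF a] prv_lt[OF a] nxt_ne_prv[OF n3 a]
    by (auto simp: eq_dm)
  qed
  show "{k. k < 2*n \<and> prism_edge n r k} = {succv n r, predv n r, oppv n r}"
    using prism_edge_iff[OF n3 r] s1 by auto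
qed

definition om :: "nat \<Rightarrow> complex" where "om n = cis (2 * pi / real n)"

lemma om_pow: "om n ^ m = cis (2 * pi * real m / real n)"
  unfolding om_def Complex.DeMoivre by (simp add: field_simps)

lemma om_n: "0 < n \<Longrightarrow> om n ^ n = 1"
  unfolding om_pow by simp

lemma om_mod: "0 < n \<Longrightarrow> om n ^ m = om n ^ (m mod n)"
proof -
  assume np: "0 < n"
  have "om n ^ m = om n ^ (n * (m div n) + m mod n)" by simp
  also have "\<dots> = (om n ^ n) ^ (m div n) * om n ^ (m mod n)" by (simp only: power_add power_mult)
  finally show ?thesis using om_n[OF np] by simp
qed

lemma om_mult_mod: "0 < n \<Longrightarrow> om n ^ (j * (x mod n)) = om n ^ (j * x)"
  by (metis om_mod mod_mult_right_eq)

lemma om_ne1: assumes "0 < m" "m < n" shows "om n ^ m \<noteq> 1"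
proof
  assume h: "om n ^ m = 1"
  have "cos (2 * pi * real m / real n) = 1" using arg_cong[OF h, of Re] unfolding om_pow by simp
  then obtain k :: int where k: "2 * pi * real m / real n = real_of_int k * 2 * pi"
    using cos_one_2pi_int by blast
  have np: "real n > 0" using assms by simp
  from k have "real m = real_of_int k * real n" using np by (simp add: field_simps)
  moreover have "0 < real m" "real m < real n" using assms by auto
  ultimately show False
  proof (cases "k \<le> 0")
    case True
    then have "real_of_int k * real n \<le> 0" using np by (simp add: mult_nonpos_nonneg)
    then show False using \<open>real m = _\<close> \<open>0 < real m\<close> by linarith
  next
    case False
    then have "real_of_int k \<ge> 1" by simp
    then have "real_of_int k * real n \<ge> real n" using np by simp
    then show False using \<open>real m = _\<close> \<open>real m < real n\<close> by linarith
  qed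
qed

lemma om_cnj: "om n ^ m * cnj (om n ^ m) = 1"
  unfolding om_pow by (simp add: cis_mult cis_cnj)

lemma geo0: assumes "z \<noteq> 1" "z ^ n = (1::complex)" shows "(\<Sum>e<n. z ^ e) = 0"
  using assms by (simp add: geometric_sum)

lemma orth:
  assumes np: "0 < n" and a: "a < n" and a': "a' < n"
  shows "(\<Sum>e<n. om n ^ (e*a) * cnj (om n ^ (e*a'))) = (if a = a' then of_nat n else 0)"
proof -
  define z where "z = om n ^ a * cnj (om n) ^ a'"
  have t: "\<And>e. om n ^ (e*a) * cnj (om n ^ (e*a')) = z ^ e"
    unfolding z_def by (simp add: power_mult_distrib power_mult[symmetric] mult.commute)
  have oc: "om n * cnj (om n) = 1" using om_cnj[of n 1] by simp
  show ?thesis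
  proof (cases "a = a'")
    case True
    then have "z = (om n * cnj (om n)) ^ a" unfolding z_def by (simp add: power_mult_distrib)
    then have "z = 1" using oc by simp
    then show ?thesis unfolding t using True by simp
  next
    case False
    have p1: "(om n ^ a) ^ n = 1" "(om n ^ a') ^ n = 1"
      by (metis om_n[OF np] power_mult mult.commute power_one)+
    have zn: "z ^ n = 1" unfolding z_def
      by (simp add: power_mult_distrib p1 flip: complex_cnj_power)
    have "z \<noteq> 1"
    proof (cases "a' < a")
      case True
      have "z = om n ^ (a - a') * (om n * cnj (om n)) ^ a'"
        unfolding z_def power_mult_distrib using True
        by (simp add: power_add[symmetric])
      then have "z = om n ^ (a - a')" using oc by simp
      then show ?thesis using om_ne1[of "a - a'" n] True a by simp
    next
      case False
      then have lt: "a < a'" using \<open>a \<noteq> a'\<close> by simp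
      have "z = cnj (om n) ^ (a' - a) * (om n * cnj (om n)) ^ a"
        unfolding z_def power_mult_distrib using lt
        by (simp add: mult.commute mult.left_commute power_add[symmetric])
      then have "z = cnj (om n ^ (a' - a))" using oc by simp
      moreover have "om n ^ (a' - a) \<noteq> 1" using om_ne1[of "a' - a" n] lt a' by simp
      ultimately show ?thesis by (metis complex_cnj_one complex_cnj_cnj)
    qed
    then show ?thesis unfolding t using geo0[OF _ zn] False by simp
  qed
qed

lemma sum_2n: fixes n :: nat shows "(\<Sum>c\<in>{0..<2*n}. g c) = (\<Sum>e<n. g e) + (\<Sum>e<n. g (n+e))"
proof -
  have "{0..<2*n} = {0..<n} \<union> {n..<2*n}" by auto
  then have "(\<Sum>c\<in>{0..<2*n}. g c) = (\<Sum>c\<in>{0..<n}. g c) + (\<Sum>c\<in>{n..<2*n}. g c)"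
    by (simp add: sum.union_disjoint)
  also have "(\<Sum>c\<in>{n..<2*n}. g c) = (\<Sum>c\<in>{0+n..<n+n}. g c)" by (simp add: mult_2)
  also have "\<dots> = (\<Sum>e\<in>{0..<n}. g (e+n))" by (rule sum.shift_bounds_nat_ivl)
  finally show ?thesis by (simp add: lessThan_atLeast0 add.commute)
qed

definition sgn2 :: "nat \<Rightarrow> nat \<Rightarrow> nat \<Rightarrow> complex" where
  "sgn2 n c r = (if c div n = 1 \<and> r div n = 1 then -1 else 1)"

definition Pm :: "nat \<Rightarrow> complex mat" where
  "Pm n = Matrix.mat (2*n) (2*n) (\<lambda>(r,c). om n ^ ((c mod n) * (r mod n)) * sgn2 n c r)"

definition Qm :: "nat \<Rightarrow> complex mat" where
  "Qm n = Matrix.mat (2*n) (2*n) (\<lambda>(r,c). cnj (Pm n $$ (c,r)) / of_nat (2*n))"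

lemma Pm_carrier: "Pm n \<in> carrier_mat (2*n) (2*n)" unfolding Pm_def by simp
lemma Qm_carrier: "Qm n \<in> carrier_mat (2*n) (2*n)" unfolding Qm_def by simp

lemma PQ: assumes np: "0 < n" shows "Pm n * Qm n = 1\<^sub>m (2*n)"
proof (rule eq_matI)
  show "dim_row (Pm n * Qm n) = dim_row (1\<^sub>m (2*n))" "dim_col (Pm n * Qm n) = dim_col (1\<^sub>m (2*n))"
    unfolding Pm_def Qm_def by simp_all
  fix r r' assume "r < dim_row (1\<^sub>m (2*n))" "r' < dim_col (1\<^sub>m (2*n))"
  then have r: "r < 2*n" and r': "r' < 2*n" by auto
  define a b a' b' where "a = r mod n" "b = r div n" "a' = r' mod n" "b' = r' div n"
  have ab: "a < n" "a' < n" "b < 2" "b' < 2" using np r r' a_b_a'_b'_def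
    by (auto simp: div_less_iff_less_mult)
  have "(Pm n * Qm n) $$ (r, r') = (\<Sum>c\<in>{0..<2*n}. Pm n $$ (r,c) * (cnj (Pm n $$ (r',c)) / of_nat (2*n)))"
    using r r' unfolding times_mat_def scalar_prod_def Qm_def Pm_def by simp
  also have "\<dots> = (\<Sum>e<n. om n ^ (e*a) * cnj (om n ^ (e*a'))) * ((1 + sgn2 n n r * cnj (sgn2 n n r')) / of_nat (2*n))"
    unfolding sum_2n using r r' np unfolding Pm_def a_b_a'_b'_def
    by (simp add: sum_distrib_right sum.distrib[symmetric] sgn2_def algebra_simps
          sum_divide_distrib[symmetric] sum_distrib_left[symmetric] sum_negf)
  also have "\<dots> = (if r = r' then 1 else 0)"
  proof -
    have rr: "r = r' \<longleftrightarrow> a = a' \<and> b = b'" unfolding a_b_a'_b'_def by (metis div_mult_mod_eq)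
    have bb: "b = 0 \<or> b = 1" "b' = 0 \<or> b' = 1" using ab by auto
    have sg: "sgn2 n n r = (if b = 1 then -1 else 1)" "sgn2 n n r' = (if b' = 1 then -1 else 1)"
      unfolding sgn2_def a_b_a'_b'_def using np by auto
    show ?thesis unfolding orth[OF np ab(1,2)] rr sg using bb np by auto
  qed
  also have "\<dots> = 1\<^sub>m (2*n) $$ (r, r')" using r r' by simp
  finally show "(Pm n * Qm n) $$ (r, r') = 1\<^sub>m (2*n) $$ (r, r')" .
qed

lemma om_conj_sum: assumes np: "0 < n"
  shows "om n ^ j + om n ^ (j*(n-1)) = complex_of_real (2 * cos (2 * pi * real j / real n))"
proof -
  have "om n ^ (j*(n-1)) * om n ^ j = om n ^ (j*(n-1) + j)" by (simp add: power_add)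
  also have "j*(n-1) + j = n * j" using np by (cases n) (auto simp: algebra_simps)
  also have "om n ^ (n*j) = 1" by (simp add: power_mult om_n[OF np])
  finally have h1: "om n ^ (j*(n-1)) * om n ^ j = 1" .
  have h2: "cnj (om n ^ j) * om n ^ j = 1" using om_cnj[of n j] by (simp add: mult.commute)
  have nz: "om n ^ j \<noteq> 0" by (simp add: om_pow)
  have "om n ^ (j*(n-1)) = cnj (om n ^ j)" using h1 h2 nz
    by (metis mult_right_cancel)
  then show ?thesis by (simp add: complex_add_cnj om_pow)
qed

definition mu :: "nat \<Rightarrow> nat \<Rightarrow> real" where
  "mu n c = 2 * cos (2 * pi * real (c mod n) / real n) + (if c div n = 0 then 1 else -1)"

definition Xm :: "nat \<Rightarrow> complex \<Rightarrow> complex mat" where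
  "Xm n t = Matrix.mat (2*n) (2*n) (\<lambda>(i,j). (if i = j then t else 0) + (if prism_edge n i j then 1 else 0))"

lemma nbr_divmod:
  assumes np: "0 < n" and r: "r < 2*n"
  shows "succv n r div n = r div n" "succv n r mod n = (r mod n + 1) mod n"
    "predv n r div n = r div n" "predv n r mod n = (r mod n + n - 1) mod n"
    "oppv n r div n = 1 - r div n" "oppv n r mod n = r mod n"
proof -
  have a: "r mod n < n" using np by simp
  show "succv n r div n = r div n" "succv n r mod n = (r mod n + 1) mod n"
    "predv n r div n = r div n" "predv n r mod n = (r mod n + n - 1) mod n"
    "oppv n r div n = 1 - r div n" "oppv n r mod n = r mod n"
    unfolding succv_def predv_def oppv_def
    using a nxt_lt[OF a] prv_lt[OF a] nxt_mod[OF a] prv_mod[OF a] by auto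
qed

lemma nbsum:
  assumes n3: "3 \<le> n" and r: "r < 2*n"
  shows "(\<Sum>k\<in>{0..<2*n}. (if prism_edge n r k then 1 else 0) * (f k :: complex)) = f (succv n r) + f (predv n r) + f (oppv n r)"
proof -
  have "(\<Sum>k\<in>{0..<2*n}. (if prism_edge n r k then 1 else 0) * f k) = (\<Sum>k\<in>{0..<2*n}. if prism_edge n r k then f k else 0)"
    by (rule sum.cong) auto
  also have "\<dots> = (\<Sum>k\<in>{k\<in>{0..<2*n}. prism_edge n r k}. f k)" by (rule sum.inter_filter[symmetric]) simp
  also have "{k\<in>{0..<2*n}. prism_edge n r k} = {succv n r, predv n r, oppv n r}"
    using nbr_set(1)[OF n3 r] by auto
  finally show ?thesis using nbr_set(2-4)[OF n3 r] by (simp add: algebra_simps)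
qed

lemma XP:
  assumes n3: "3 \<le> n"
  shows "Xm n t * Pm n = Pm n * Matrix.mat (2*n) (2*n) (\<lambda>(i,j). if i = j then complex_of_real (mu n i) + t else 0)"
proof (rule eq_matI)
  have np: "0 < n" using n3 by simp
  show "dim_row (Xm n t * Pm n) = dim_row (Pm n * Matrix.mat (2*n) (2*n) (\<lambda>(i,j). if i = j then complex_of_real (mu n i) + t else 0))"
    "dim_col (Xm n t * Pm n) = dim_col (Pm n * Matrix.mat (2*n) (2*n) (\<lambda>(i,j). if i = j then complex_of_real (mu n i) + t else 0))"
    unfolding Xm_def Pm_def by simp_all
  fix r c assume "r < dim_row (Pm n * Matrix.mat (2*n) (2*n) (\<lambda>(i,j). if i = j then complex_of_real (mu n i) + t else 0))"
    "c < dim_col (Pm n * Matrix.mat (2*n) (2*n) (\<lambda>(i,j). if i = j then complex_of_real (mu n i) + t else 0))"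
  then have r: "r < 2*n" and c: "c < 2*n" unfolding Pm_def by auto
  define P where "P = (\<lambda>x. om n ^ ((c mod n) * (x mod n)) * sgn2 n c x)"
  have Pe: "\<And>x. x < 2*n \<Longrightarrow> Pm n $$ (x,c) = P x" unfolding Pm_def P_def using c by simp
  have "(Xm n t * Pm n) $$ (r,c) = (\<Sum>k\<in>{0..<2*n}. ((if r = k then t else 0) + (if prism_edge n r k then 1 else 0)) * P k)"
    unfolding times_mat_def scalar_prod_def using r c Pe by (simp add: Xm_def Pm_def P_def)
  also have "\<dots> = (\<Sum>k\<in>{0..<2*n}. (if r = k then t * P k else 0)) + (\<Sum>k\<in>{0..<2*n}. (if prism_edge n r k then 1 else 0) * P k)"
    unfolding sum.distrib[symmetric] by (rule sum.cong) (auto simp: distrib_right)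
  also have "\<dots> = t * P r + (P (succv n r) + P (predv n r) + P (oppv n r))"
  proof -
    have "(\<Sum>k\<in>{0..<2*n}. (if r = k then t * P k else 0)) = t * P r" using r by (simp add: sum.delta)
    then show ?thesis by (simp add: nbsum[OF n3 r])
  qed
  also have "P (succv n r) + P (predv n r) + P (oppv n r) = P r * complex_of_real (mu n c)"
  proof -
    define j a b where "j = c mod n" "a = r mod n" "b = r div n"
    have "b < 2" using r unfolding j_a_b_def by (auto simp: div_less_iff_less_mult)
    then have bb: "b = 0 \<or> b = 1" by auto
    have "c div n < 2" using c by (auto simp: div_less_iff_less_mult)
    then have cc: "c div n = 0 \<or> c div n = 1" by auto
    have s1: "om n ^ (j * ((a + 1) mod n)) = om n ^ (j*a) * om n ^ j"
      by (simp add: om_mult_mod[OF np] power_add algebra_simps)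
    have s2: "om n ^ (j * ((a + n - 1) mod n)) = om n ^ (j*a) * om n ^ (j*(n-1))"
      using np by (simp add: om_mult_mod[OF np] power_add[symmetric] algebra_simps)
    have sg: "sgn2 n c (oppv n r) = sgn2 n c r * (if c div n = 0 then 1 else -1)"
      unfolding sgn2_def nbr_divmod[OF np r] j_a_b_def[symmetric] using bb cc by auto
    have "P (succv n r) + P (predv n r) + P (oppv n r) =
      om n ^ (j*a) * sgn2 n c r * ((om n ^ j + om n ^ (j*(n-1))) + (if c div n = 0 then 1 else -1))"
      unfolding P_def sg unfolding sgn2_def nbr_divmod[OF np r] j_a_b_def[symmetric] s1 s2
      by (simp add: algebra_simps)
    also have "\<dots> = P r * complex_of_real (mu n c)"
      unfolding om_conj_sum[OF np] P_def mu_def j_a_b_def by simp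
    finally show ?thesis .
  qed
  also have "t * P r + P r * complex_of_real (mu n c) = (Pm n * Matrix.mat (2*n) (2*n) (\<lambda>(i,j). if i = j then complex_of_real (mu n i) + t else 0)) $$ (r,c)"
  proof -
    have "(Pm n * Matrix.mat (2*n) (2*n) (\<lambda>(i,j). if i = j then complex_of_real (mu n i) + t else 0)) $$ (r,c)
       = (\<Sum>k\<in>{0..<2*n}. Pm n $$ (r,k) * (if k = c then complex_of_real (mu n c) + t else 0))"
      unfolding times_mat_def scalar_prod_def using r c by (auto simp: Pm_def intro!: sum.cong)
    also have "\<dots> = Pm n $$ (r,c) * (complex_of_real (mu n c) + t)"
      using c by (simp add: if_distrib sum.delta' cong: if_cong)
    also have "Pm n $$ (r,c) = om n ^ ((c mod n) * (r mod n)) * sgn2 n c r" using r c unfolding Pm_def by simp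
    finally show ?thesis unfolding P_def by (simp add: algebra_simps)
  qed
  finally show "(Xm n t * Pm n) $$ (r,c) = (Pm n * Matrix.mat (2*n) (2*n) (\<lambda>(i,j). if i = j then complex_of_real (mu n i) + t else 0)) $$ (r,c)" .
qed

lemma prism_sym: "prism_edge n i j = prism_edge n j i"
  unfolding prism_edge_def by auto

lemma prism_irrefl: assumes "3 \<le> n" shows "\<not> prism_edge n i i"
proof
  assume h: "prism_edge n i i"
  have a: "i mod n < n" using assms by simp
  from h have "(i mod n + 1) mod n = i mod n" unfolding prism_edge_def by auto
  then show False unfolding nxt_mod[OF a] nxt_def using assms by (auto split: if_splits)
qed

lemma vdeg3: assumes n3: "3 \<le> n" and r: "r < 2*n" shows "vdeg (2*n) (prism_edge n) r = 3"
  unfolding vdeg_def nbr_set(1)[OF n3 r] using nbr_set(2-4)[OF n3 r] by simp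

lemma adj_Xm: "map_mat complex_of_real (adj_mat (2*n) (prism_edge n)) = Xm n 0"
  unfolding adj_mat_def Xm_def by (rule eq_matI) auto

lemma sl_Xm: assumes n3: "3 \<le> n"
  shows "map_mat complex_of_real (signless_laplacian (2*n) (prism_edge n)) = Xm n 3"
  unfolding signless_laplacian_def deg_mat_def adj_mat_def Xm_def
  by (rule eq_matI) (auto simp: vdeg3[OF n3])

lemma eig_Xm: assumes n3: "3 \<le> n"
  shows "char_poly (Xm n t) = (\<Prod>a\<in># mset (map (\<lambda>i. complex_of_real (mu n i) + t) [0..<2*n]). [:- a, 1:])"
proof (rule char_poly_diag[OF _ Pm_carrier Qm_carrier PQ XP[OF n3]])
  show "Xm n t \<in> carrier_mat (2*n) (2*n)" unfolding Xm_def by simp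
  show "0 < n" using n3 by simp
qed

lemma eig_adj: assumes n3: "3 \<le> n"
  shows "eigvals (adj_mat (2*n) (prism_edge n)) = mset (map (\<lambda>i. complex_of_real (mu n i)) [0..<2*n])"
  using eigvals_eqI[of "adj_mat (2*n) (prism_edge n)"] eig_Xm[OF n3, of 0] adj_Xm by simp

lemma eig_sl: assumes n3: "3 \<le> n"
  shows "eigvals (signless_laplacian (2*n) (prism_edge n)) = mset (map (\<lambda>i. complex_of_real (mu n i) + 3) [0..<2*n])"
  using eigvals_eqI[of "signless_laplacian (2*n) (prism_edge n)"] eig_Xm[OF n3, of 3] sl_Xm[OF n3] by simp

lemma num_edges3: assumes n3: "3 \<le> n" shows "num_edges (2*n) (prism_edge n) = 3*n"
proof -
  define L where "L = {(i,j). i < j \<and> j < 2*n \<and> prism_edge n i j}"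
  define G where "G = {(i,j). j < i \<and> i < 2*n \<and> prism_edge n i j}"
  define F where "F = Sigma {..<2*n} (\<lambda>i. {j. j < 2*n \<and> prism_edge n i j})"
  have fin: "finite F" unfolding F_def by auto
  have cF: "card F = 6*n"
  proof -
    have "card F = (\<Sum>i<2*n. card {j. j < 2*n \<and> prism_edge n i j})"
      unfolding F_def by (rule card_SigmaI) auto
    also have "\<dots> = (\<Sum>i<2*n. 3)" using vdeg3[OF n3] unfolding vdeg_def by simp
    finally show ?thesis by simp
  qed
  have FLG: "F = L \<union> G" unfolding F_def L_def G_def using prism_irrefl[OF n3]
    by (auto simp: prism_sym) (metis linorder_neqE_nat)
  have disj: "L \<inter> G = {}" unfolding L_def G_def by auto
  have GL: "G = (\<lambda>(i,j). (j,i)) ` L" unfolding L_def G_def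
    by (auto simp: image_iff prism_sym)
  have inj: "inj_on (\<lambda>(i,j). (j,i)) L" by (auto simp: inj_on_def)
  have finL: "finite L" "finite G" using fin FLG by auto
  have "card F = card L + card G" unfolding FLG using finL disj by (simp add: card_Un_disjoint)
  also have "card G = card L" unfolding GL using inj by (simp add: card_image)
  finally have "card L = 3*n" using cF by simp
  then show ?thesis unfolding num_edges_def L_def .
qed

lemma sum_mset_map_upt: "sum_mset (image_mset g (mset (map f [0..<N]))) = (\<Sum>c\<in>{0..<N}. g (f c))"
  by (induction N) (auto simp: add.commute)

lemma EG_mu: assumes n3: "3 \<le> n"
  shows "graph_energy (2*n) (prism_edge n) = (\<Sum>c\<in>{0..<2*n}. \<bar>mu n c\<bar>)"
  unfolding graph_energy_def eig_adj[OF n3] sum_mset_map_upt by simp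

lemma QE_mu: assumes n3: "3 \<le> n"
  shows "signless_laplacian_energy (2*n) (prism_edge n) = (\<Sum>c\<in>{0..<2*n}. \<bar>mu n c\<bar>)"
proof -
  have "2 * real (num_edges (2*n) (prism_edge n)) / real (2*n) = 3"
    unfolding num_edges3[OF n3] using n3 by simp
  then show ?thesis unfolding signless_laplacian_energy_def eig_sl[OF n3] sum_mset_map_upt by simp
qed

definition hh :: "real \<Rightarrow> real" where "hh x = \<bar>2*x+1\<bar> + \<bar>2*x-1\<bar>"

lemma mu_sum_hh: assumes np: "0 < n"
  shows "(\<Sum>c\<in>{0..<2*n}. g (mu n c)) = (\<Sum>j<n. g (2 * cos (2*pi*real j/real n) + 1) + g (2 * cos (2*pi*real j/real n) - 1))"
  unfolding sum_2n sum.distrib[symmetric] by (rule sum.cong) (auto simp: mu_def)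

lemma E_hh: assumes np: "0 < n"
  shows "(\<Sum>c\<in>{0..<2*n}. \<bar>mu n c\<bar>) = (\<Sum>j<n. hh (cos (2*pi*real j/real n)))"
  unfolding mu_sum_hh[OF np] hh_def by simp

lemma sum_cos_zero: assumes np: "0 < n" and m: "0 < m" "m < n"
  shows "(\<Sum>j<n. cos (2*pi*real (m*j)/real n)) = 0"
proof -
  have "(\<Sum>j<n. (om n ^ m) ^ j) = 0"
  proof (rule geo0)
    show "om n ^ m \<noteq> 1" by (rule om_ne1[OF m])
    show "(om n ^ m) ^ n = 1" by (metis om_n[OF np] power_mult mult.commute power_one)
  qed
  then have "Re (\<Sum>j<n. (om n ^ m) ^ j) = 0" by simp
  moreover have "\<And>j. Re ((om n ^ m) ^ j) = cos (2*pi*real (m*j)/real n)"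
  proof -
    fix j
    have "(om n ^ m) ^ j = om n ^ (m*j)" by (simp add: power_mult)
    then show "Re ((om n ^ m) ^ j) = cos (2*pi*real (m*j)/real n)" by (simp add: om_pow)
  qed
  ultimately show ?thesis by (simp add: Re_sum)
qed

lemma sum_cos2: assumes n3: "3 \<le> n"
  shows "(\<Sum>j<n. (cos (2*pi*real j/real n))^2) = real n / 2"
proof -
  have np: "0 < n" using n3 by simp
  have cj: "\<And>j. (cos (2*pi*real j/real n))^2 = (1 + cos (2*pi*real (2*j)/real n)) / 2"
  proof -
    fix j
    have e: "2*pi*real (2*j)/real n = 2 * (2*pi*real j/real n)" by simp
    show "(cos (2*pi*real j/real n))^2 = (1 + cos (2*pi*real (2*j)/real n)) / 2"
      unfolding e cos_double_cos by simp
  qed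
  have "(\<Sum>j<n. (cos (2*pi*real j/real n))^2) = (\<Sum>j<n. (1 + cos (2*pi*real (2*j)/real n)) / 2)"
    by (rule sum.cong[OF refl], rule cj)
  also have "\<dots> = (real n + (\<Sum>j<n. cos (2*pi*real (2*j)/real n))) / 2"
    by (simp add: sum_divide_distrib[symmetric] sum.distrib)
  also have "(\<Sum>j<n. cos (2*pi*real (2*j)/real n)) = 0" using sum_cos_zero[OF np, of 2] n3 by simp
  finally show ?thesis by simp
qed

lemma mu_sq: assumes n3: "3 \<le> n" shows "(\<Sum>c\<in>{0..<2*n}. (mu n c)^2) = 6 * real n"
proof -
  have np: "0 < n" using n3 by simp
  have "(\<Sum>c\<in>{0..<2*n}. (mu n c)^2) = (\<Sum>j<n. 8 * (cos (2*pi*real j/real n))^2 + 2)"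
    unfolding mu_sum_hh[OF np, of "\<lambda>x. x^2"] by (rule sum.cong) (auto simp: power2_eq_square algebra_simps)
  also have "\<dots> = 8 * (\<Sum>j<n. (cos (2*pi*real j/real n))^2) + 2 * real n"
    by (simp add: sum.distrib sum_distrib_left)
  finally show ?thesis unfolding sum_cos2[OF n3] by simp
qed

lemma cs_strict:
  fixes x :: "nat \<Rightarrow> real"
  assumes fin: "finite R" and i: "i \<in> R" and xi: "x i = 1" and N: "N = real (card R)"
    and NQ: "N < (\<Sum>c\<in>R. (x c)^2)"
  shows "(\<Sum>c\<in>R. x c)^2 < N * (\<Sum>c\<in>R. (x c)^2)"
proof -
  define S Q where "S = (\<Sum>c\<in>R. x c)" "Q = (\<Sum>c\<in>R. (x c)^2)"
  have Npos: "N > 0" using fin i N by (auto simp: card_gt_0_iff)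
  define m where "m = S / N"
  have exp: "(\<Sum>c\<in>R. (x c - m)^2) = Q - 2*m*S + N*m^2"
    unfolding S_Q_def N by (simp add: power2_diff sum.distrib sum_subtractf sum_distrib_left[symmetric] sum_distrib_right[symmetric] algebra_simps)
  also have "\<dots> = Q - S^2/N" unfolding m_def using Npos by (simp add: field_simps power2_eq_square)
  finally have e: "(\<Sum>c\<in>R. (x c - m)^2) = Q - S^2/N" .
  show ?thesis
  proof (cases "m = 1")
    case True
    then have "S = N" unfolding m_def using Npos by (simp add: field_simps)
    then show ?thesis using NQ Npos unfolding S_Q_def[symmetric] by (simp add: power2_eq_square)
  next
    case False
    have "(x i - m)^2 \<le> (\<Sum>c\<in>R. (x c - m)^2)"
      by (rule member_le_sum[OF i]) (auto simp: fin)
    moreover have "(x i - m)^2 > 0" using False xi by simp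
    ultimately have "Q - S^2/N > 0" using e by linarith
    then have "S^2/N < Q" by simp
    then have "S^2 < Q * N" using Npos by (simp add: divide_less_eq)
    then show ?thesis unfolding S_Q_def by (simp add: mult.commute)
  qed
qed

lemma upper_bound:
  assumes n3: "3 \<le> n"
  shows "(\<Sum>c\<in>{0..<2*n}. \<bar>mu n c\<bar>) < 3 + sqrt (3 * (2 * real n - 1) * (2 * real n - 3))"
proof -
  have np: "0 < n" using n3 by simp
  define R where "R = {1..<2*n}"
  have split: "{0..<2*n} = insert 0 R" unfolding R_def using np by auto
  have R0: "0 \<notin> R" "finite R" unfolding R_def by auto
  have mu0: "mu n 0 = 3" unfolding mu_def by simp
  have mun: "mu n n = 1" unfolding mu_def using np by simp
  have "(\<Sum>c\<in>{0..<2*n}. (mu n c)^2) = 9 + (\<Sum>c\<in>R. (mu n c)^2)"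
    unfolding split using R0 mu0 by simp
  then have Q: "(\<Sum>c\<in>R. \<bar>mu n c\<bar>^2) = 6 * real n - 9" using mu_sq[OF n3] by simp
  have E: "(\<Sum>c\<in>{0..<2*n}. \<bar>mu n c\<bar>) = 3 + (\<Sum>c\<in>R. \<bar>mu n c\<bar>)"
    unfolding split using R0 mu0 by simp
  have cR: "real (card R) = 2 * real n - 1" unfolding R_def using np by simp
  have nR: "n \<in> R" unfolding R_def using np by simp
  have "(\<Sum>c\<in>R. \<bar>mu n c\<bar>)^2 < (2 * real n - 1) * (\<Sum>c\<in>R. \<bar>mu n c\<bar>^2)"
    by (rule cs_strict[OF R0(2) nR]) (use mun cR Q n3 in auto)
  also have "\<dots> = 3 * (2 * real n - 1) * (2 * real n - 3)" unfolding Q by (simp add: algebra_simps)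
  finally have "(\<Sum>c\<in>R. \<bar>mu n c\<bar>) < sqrt (3 * (2 * real n - 1) * (2 * real n - 3))"
    by (rule real_less_rsqrt)
  then show ?thesis unfolding E by simp
qed

lemma hh_ge2: "hh x \<ge> 2" unfolding hh_def by linarith

lemma E_lower:
  assumes n3: "3 \<le> n"
  shows "(\<Sum>j<n. hh (cos (2*pi*real j/real n))) \<ge> 2 * real n + 2 + (if even n then 2 else 0)"
proof -
  have np: "0 < n" using n3 by simp
  define f where "f = (\<lambda>j. hh (cos (2*pi*real j/real n)) - 2)"
  have fnn: "\<And>j. f j \<ge> 0" unfolding f_def using hh_ge2 by simp
  have f0: "f 0 = 2" unfolding f_def hh_def by simp
  have "(\<Sum>j<n. hh (cos (2*pi*real j/real n))) = 2 * real n + (\<Sum>j<n. f j)"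
    unfolding f_def by (simp add: sum_subtractf)
  moreover have "(\<Sum>j<n. f j) \<ge> 2 + (if even n then 2 else 0)"
  proof (cases "even n")
    case True
    define h where "h = n div 2"
    have hn: "real h = real n / 2" using True unfolding h_def by auto
    have "cos (2*pi*real h/real n) = -1" unfolding hn using np by simp
    then have fh: "f h = 2" unfolding f_def hh_def by simp
    have h0: "h \<noteq> 0" "h < n" using n3 unfolding h_def by auto
    have "(\<Sum>j\<in>{0,h}. f j) \<le> (\<Sum>j<n. f j)"
      by (rule sum_mono2) (use h0 np fnn in auto)
    then show ?thesis using True f0 fh h0 by simp
  next
    case False
    have "(\<Sum>j\<in>{0}. f j) \<le> (\<Sum>j<n. f j)"
      by (rule sum_mono2) (use np fnn in auto)
    then show ?thesis using False f0 by simp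
  qed
  ultimately show ?thesis by linarith
qed




lemma cos_diff_le:
  assumes "0 \<le> y" "y \<le> x" "x \<le> pi"
  shows "cos y - cos x \<le> x - y"
proof -
  have e: "cos y - cos x = 2 * sin ((y + x) / 2) * sin ((x - y) / 2)" by (rule cos_diff_cos)
  have b0: "0 \<le> sin ((x - y) / 2)" using assms by (intro sin_ge_zero) auto
  have b1: "sin ((x - y) / 2) \<le> (x - y) / 2" using assms by (intro sin_x_le_x) auto
  have a1: "sin ((y + x) / 2) \<le> 1" by simp
  have "2 * sin ((y + x) / 2) * sin ((x - y) / 2) \<le> 2 * 1 * sin ((x - y) / 2)"
    using a1 b0 by (intro mult_right_mono) auto
  also have "\<dots> \<le> x - y" using b1 by simp
  finally show ?thesis using e by simp
qed

lemma caseA: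
  assumes n3: "3 \<le> n" and r: "n mod 6 = 1 \<or> n mod 6 = 2"
  defines "c \<equiv> cos (2 * pi * real (n div 6) / real n)"
  shows "1/2 \<le> c" "2*c - 1 \<le> 2 * pi * real (n mod 6) / (3 * real n)"
proof -
  define k where "k = n div 6"
  define rr where "rr = n mod 6"
  have nk: "real n = 6 * real k + real rr" unfolding k_def rr_def
    by (metis div_mult_mod_eq of_nat_add of_nat_mult of_nat_numeral mult.commute)
  have np: "real n > 0" using n3 by simp
  define th where "th = 2 * pi * real k / real n"
  have d: "pi/3 - th = pi * real rr / (3 * real n)" unfolding th_def using np nk
    by (simp add: field_simps)
  have th0: "0 \<le> th" unfolding th_def using np by simp
  have "pi * real rr / (3 * real n) \<ge> 0" using np by (intro divide_nonneg_nonneg) auto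
  then have th1: "th \<le> pi/3" using d by linarith
  have "cos (pi/3) \<le> cos th" using th0 th1 by (intro cos_monotone_0_pi_le) auto
  then show "1/2 \<le> c" unfolding c_def th_def k_def cos_60 .
  have "cos th - cos (pi/3) \<le> pi/3 - th" using th0 th1 by (intro cos_diff_le) auto
  then show "2*c - 1 \<le> 2 * pi * real (n mod 6) / (3 * real n)"
    unfolding c_def th_def[symmetric] k_def[symmetric] rr_def[symmetric] cos_60 d by simp
qed

lemma ceil6:
  assumes "n mod 6 = 4 \<or> n mod 6 = 5"
  shows "\<lceil>real n / 6\<rceil> = int (n div 6) + 1"
proof (rule ceiling_unique)
  have nk: "real n = 6 * real (n div 6) + real (n mod 6)"
    by (metis div_mult_mod_eq of_nat_add of_nat_mult of_nat_numeral mult.commute)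
  have "real (n mod 6) \<ge> 4" "real (n mod 6) \<le> 5" using assms by auto
  then show "real_of_int (int (n div 6) + 1) - 1 < real n / 6" "real n / 6 \<le> real_of_int (int (n div 6) + 1)"
    using nk by auto
qed

lemma caseB:
  assumes n3: "3 \<le> n" and r: "n mod 6 = 4 \<or> n mod 6 = 5"
  defines "c \<equiv> cos (2 * pi * of_int \<lceil>real n / 6\<rceil> / real n)"
  shows "0 \<le> c" "c \<le> 1/2" "1 - 2*c \<le> 2 * pi * real (6 - n mod 6) / (3 * real n)"
proof -
  define k where "k = n div 6 + 1"
  define s where "s = 6 - n mod 6"
  have kc: "of_int \<lceil>real n / 6\<rceil> = real k" unfolding ceil6[OF r] k_def by simp
  have s12: "s = 1 \<or> s = 2" unfolding s_def using r by auto
  have nk: "real n + real s = 6 * real k" unfolding k_def s_def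
  proof -
    have "n = 6 * (n div 6) + n mod 6" by simp
    moreover have "n mod 6 < 6" by simp
    have "n + (6 - n mod 6) = 6 * (n div 6 + 1)" by presburger
    then show "real n + real (6 - n mod 6) = 6 * real (n div 6 + 1)" by (metis of_nat_add of_nat_mult of_nat_numeral)
  qed
  have np: "real n > 0" using n3 by simp
  define th where "th = 2 * pi * real k / real n"
  have kk: "real k = (real n + real s) / 6" using nk by simp
  have d: "th - pi/3 = pi * real s / (3 * real n)" unfolding th_def kk using np
    by (simp add: field_simps)
  have "pi * real s / (3 * real n) \<ge> 0" using np by (intro divide_nonneg_nonneg) auto
  then have th1: "pi/3 \<le> th" using d by linarith
  have "4 * real k \<le> real n" using nk s12 r unfolding k_def by auto
  then have th2: "th \<le> pi/2" unfolding th_def using np by (simp add: field_simps)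
  show "0 \<le> c" unfolding c_def kc th_def[symmetric] using th1 th2
    by (intro cos_ge_zero) (use pi_gt_zero in linarith)+
  have "cos th \<le> cos (pi/3)" using th1 th2 by (intro cos_monotone_0_pi_le) auto
  then show "c \<le> 1/2" unfolding c_def kc th_def[symmetric] cos_60 .
  have "cos (pi/3) - cos th \<le> th - pi/3" using th1 th2 by (intro cos_diff_le) auto
  then show "1 - 2*c \<le> 2 * pi * real (6 - n mod 6) / (3 * real n)"
    unfolding c_def kc th_def[symmetric] s_def[symmetric] cos_60 d by simp
qed

lemma fmono:
  assumes "0 \<le> d" "d \<le> D" "D \<le> 3"
  shows "sqrt d / (3 + d) \<le> sqrt D / (3 + D)"
proof -
  define u v where "u = sqrt d" "v = sqrt D"
  have uv: "0 \<le> u" "u \<le> v" "d = u^2" "D = v^2" unfolding u_v_def using assms by auto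
  have "u * v \<le> v * v" using uv by (intro mult_right_mono) auto
  then have uv3: "u * v \<le> 3" using uv assms by (simp add: power2_eq_square)
  have "0 \<le> (v - u) * (3 - u * v)" using uv uv3 by simp
  then have "u * (3 + v^2) \<le> v * (3 + u^2)" by (simp add: algebra_simps power2_eq_square)
  then have "u / (3 + u^2) \<le> v / (3 + v^2)"
    by (simp add: divide_simps add_pos_nonneg)
  then show ?thesis using uv unfolding u_v_def by simp
qed

lemma crude:
  assumes np: "0 < n" and d0: "0 \<le> d" and dd: "d \<le> 2 * pi * rho / (3 * real n)" and rho: "0 \<le> rho"
    and T: "0 < T" "32 * pi * rho * real n / 3 < T^2"
  shows "12 * real n * sqrt d / (3 + d) < T"
proof -
  have sd: "0 \<le> sqrt d" using d0 by simp
  have "12 * real n * sqrt d / (3 + d) \<le> 12 * real n * sqrt d / 3"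
    using d0 sd np by (intro divide_left_mono) auto
  also have "\<dots> = sqrt (16 * (real n)^2 * d)"
    using np by (simp add: real_sqrt_mult)
  also have "\<dots> \<le> sqrt (16 * (real n)^2 * (2 * pi * rho / (3 * real n)))"
    using dd by (intro real_sqrt_le_mono mult_left_mono) auto
  also have "16 * (real n)^2 * (2 * pi * rho / (3 * real n)) = 32 * pi * rho * real n / 3"
    using np by (simp add: field_simps power2_eq_square)
  also have "sqrt (32 * pi * rho * real n / 3) < T" using T by (intro real_less_lsqrt) auto
  finally show ?thesis .
qed

lemma pi_up: "pi \<le> 3.1416" using pi_approx(2) by simp

lemma bound_odd:
  assumes n7: "7 \<le> n" and d0: "0 \<le> d" and dd: "d \<le> 2 * pi * 1 / (3 * real n)"
  shows "12 * real n * sqrt d / (3 + d) < 2 * real n + 2"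
proof (rule crude[OF _ d0 dd])
  show "0 < n" using n7 by simp
  have n7': "real n \<ge> 7" using n7 by simp
  have "32 * pi * 1 * real n / 3 \<le> 32 * 3.1416 * real n / 3" using pi_up n7' by simp
  also have "\<dots> < (2 * real n + 2)^2"
  proof -
    have h: "real n * real n \<ge> 7 * real n" using n7' by (intro mult_right_mono) auto
    show ?thesis using n7' by (simp add: power2_eq_square algebra_simps) (use h in linarith)
  qed
  finally show "32 * pi * 1 * real n / 3 < (2 * real n + 2)^2" .
qed auto

lemma bound_even:
  assumes n14: "14 \<le> n" and d0: "0 \<le> d" and dd: "d \<le> 2 * pi * 2 / (3 * real n)"
  shows "12 * real n * sqrt d / (3 + d) < 2 * real n + 4"
proof (rule crude[OF _ d0 dd])
  show "0 < n" using n14 by simp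
  have n7': "real n \<ge> 14" using n14 by simp
  have "32 * pi * 2 * real n / 3 \<le> 32 * 3.1416 * 2 * real n / 3" using pi_up n7' by simp
  also have "\<dots> < (2 * real n + 4)^2"
  proof -
    have h: "real n * real n \<ge> 14 * real n" using n7' by (intro mult_right_mono) auto
    show ?thesis using n7' by (simp add: power2_eq_square algebra_simps) (use h in linarith)
  qed
  finally show "32 * pi * 2 * real n / 3 < (2 * real n + 4)^2" .
qed auto

lemma bound_small:
  assumes d0: "0 \<le> d" and dd: "d \<le> 2 * pi / 15"
  shows "sqrt d / (3 + d) < 0.18936"
proof -
  have "2 * pi / 15 \<le> 0.419" using pi_up by simp
  then have "sqrt d / (3 + d) \<le> sqrt 0.419 / (3 + 0.419)" using d0 dd by (intro fmono) auto
  also have "sqrt 0.419 < (0.6474::real)" by (rule real_less_lsqrt) (auto simp: power2_eq_square)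
  then have "sqrt 0.419 / (3 + 0.419) < 0.6474 / (3 + (0.419::real))" by (simp add: divide_strict_right_mono)
  finally show ?thesis by simp
qed

definition LBf :: "nat \<Rightarrow> real" where
  "LBf n = (if n mod 3 = 0 then 2 * real n
         else if n mod 6 = 1 \<or> n mod 6 = 2 then
           6 * real n * sqrt (2 * cos (2 * pi * real (n div 6) / real n) - 1)
             / (1 + cos (2 * pi * real (n div 6) / real n))
         else
           6 * real n * sqrt (1 - 2 * cos (2 * pi * of_int \<lceil>real n / 6\<rceil> / real n))
             / (2 - cos (2 * pi * of_int \<lceil>real n / 6\<rceil> / real n)))"

lemma LB_rw: "6 * real n * sqrt d / ((3 + d) / 2) = 12 * real n * sqrt d / (3 + d)"
  by (simp add: field_simps)

lemma n8: "12 * real 8 * sqrt (sqrt 2 - 1) / (3 + (sqrt 2 - 1)) < 2 * real 8 + 4"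
proof -
  have s1: "sqrt 2 < (1.4225::real)" by (rule real_less_lsqrt) (simp_all add: power2_eq_square)
  have s2: "(1.4::real) < sqrt 2" by (rule real_less_rsqrt) (simp add: power2_eq_square)
  have a: "sqrt (sqrt 2 - 1) < (0.65::real)"
  proof (rule real_less_lsqrt)
    show "sqrt 2 - 1 < (0.65::real)^2" using s1 by (simp add: power2_eq_square)
  qed simp
  have b: "3.4 < 3 + (sqrt 2 - 1)" using s2 by simp
  have c: "sqrt (sqrt 2 - 1) / (3 + (sqrt 2 - 1)) < 0.65 / 3.4"
    by (rule frac_less) (use a b in auto)
  have e: "12 * real 8 * sqrt (sqrt 2 - 1) / (3 + (sqrt 2 - 1)) = 96 * (sqrt (sqrt 2 - 1) / (3 + (sqrt 2 - 1)))"
    by simp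
  show ?thesis unfolding e using c by simp
qed


lemma key_less:
  assumes n3: "3 \<le> n" and n4: "n \<noteq> 4"
  shows "LBf n < 2 * real n + 2 + (if even n then 2 else 0)"
proof -
  have np: "0 < n" using n3 by simp
  have "n mod 3 = 0 \<or> n mod 6 = 1 \<or> n mod 6 = 2 \<or> n mod 6 = 4 \<or> n mod 6 = 5" by presburger
  then show ?thesis
  proof (elim disjE)
    assume 1: "n mod 3 = 0" then show ?thesis unfolding LBf_def by simp
  next
    assume 2: "n mod 6 = 1"
    define c where "c = cos (2 * pi * real (n div 6) / real n)"
    have cA: "1/2 \<le> c" "2*c - 1 \<le> 2 * pi * real (n mod 6) / (3 * real n)" using caseA[OF n3] 2 unfolding c_def by auto
    have m3: "n mod 3 \<noteq> 0" "odd n" using 2 by presburger+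
    have L0: "LBf n = 6 * real n * sqrt (2*c-1) / (1 + c)"
      unfolding LBf_def c_def[symmetric] using m3 2 by simp
    have cc: "1 + c = (3 + (2*c-1)) / 2" by simp
    have L: "LBf n = 12 * real n * sqrt (2*c-1) / (3 + (2*c-1))"
      unfolding L0 cc LB_rw ..
    have "7 \<le> n" using 2 n3 by presburger
    then have "LBf n < 2 * real n + 2" unfolding L using cA 2 by (intro bound_odd) auto
    then show ?thesis using m3 by simp
  next
    assume 3: "n mod 6 = 2"
    define c where "c = cos (2 * pi * real (n div 6) / real n)"
    have cA: "1/2 \<le> c" "2*c - 1 \<le> 2 * pi * real (n mod 6) / (3 * real n)" using caseA[OF n3] 3 unfolding c_def by auto
    have m3: "n mod 3 \<noteq> 0" "even n" using 3 by presburger+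
    have L0: "LBf n = 6 * real n * sqrt (2*c-1) / (1 + c)"
      unfolding LBf_def c_def[symmetric] using m3 3 by simp
    have cc: "1 + c = (3 + (2*c-1)) / 2" by simp
    have L: "LBf n = 12 * real n * sqrt (2*c-1) / (3 + (2*c-1))"
      unfolding L0 cc LB_rw ..
    have "n = 8 \<or> 14 \<le> n" using 3 n3 by presburger
    then have "LBf n < 2 * real n + 4"
    proof
      assume n8: "n = 8"
      have "c = sqrt 2 / 2" unfolding c_def n8 using cos_45 by (simp add: field_simps)
      then have "2*c - 1 = sqrt 2 - 1" by simp
      then show ?thesis unfolding L using n8 Submission.n8 by simp
    next
      assume "14 \<le> n"
      then show ?thesis unfolding L using cA 3 by (intro bound_even) auto
    qed
    then show ?thesis using m3 by simp
  next
    assume 4: "n mod 6 = 4"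
    define c where "c = cos (2 * pi * of_int \<lceil>real n / 6\<rceil> / real n)"
    have cB: "0 \<le> c" "c \<le> 1/2" "1 - 2*c \<le> 2 * pi * real (6 - n mod 6) / (3 * real n)"
      using caseB[OF n3] 4 unfolding c_def by auto
    have m3: "n mod 3 \<noteq> 0" "even n" "\<not> (n mod 6 = 1 \<or> n mod 6 = 2)" using 4 by presburger+
    have L0: "LBf n = 6 * real n * sqrt (1-2*c) / (2 - c)"
      unfolding LBf_def c_def[symmetric] using m3 4 by simp
    have cc: "2 - c = (3 + (1-2*c)) / 2" by simp
    have L: "LBf n = 12 * real n * sqrt (1-2*c) / (3 + (1-2*c))"
      unfolding L0 cc LB_rw ..
    have "n = 10 \<or> 16 \<le> n" using 4 n3 n4 by presburger
    then have "LBf n < 2 * real n + 4"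
    proof
      assume n10: "n = 10"
      define q where "q = sqrt (1-2*c) / (3 + (1-2*c))"
      have Lq: "LBf n = 12 * real n * q" unfolding L q_def by simp
      have "q < 0.18936" unfolding q_def using cB 4 n10 by (intro bound_small) auto
      then show ?thesis using Lq n10 by simp
    next
      assume "16 \<le> n"
      then show ?thesis unfolding L using cB 4 by (intro bound_even) auto
    qed
    then show ?thesis using m3 by simp
  next
    assume 5: "n mod 6 = 5"
    define c where "c = cos (2 * pi * of_int \<lceil>real n / 6\<rceil> / real n)"
    have cB: "0 \<le> c" "c \<le> 1/2" "1 - 2*c \<le> 2 * pi * real (6 - n mod 6) / (3 * real n)"
      using caseB[OF n3] 5 unfolding c_def by auto
    have m3: "n mod 3 \<noteq> 0" "odd n" "\<not> (n mod 6 = 1 \<or> n mod 6 = 2)" using 5 by presburger+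
    have L0: "LBf n = 6 * real n * sqrt (1-2*c) / (2 - c)"
      unfolding LBf_def c_def[symmetric] using m3 5 by simp
    have cc: "2 - c = (3 + (1-2*c)) / 2" by simp
    have L: "LBf n = 12 * real n * sqrt (1-2*c) / (3 + (1-2*c))"
      unfolding L0 cc LB_rw ..
    have "n = 5 \<or> 11 \<le> n" using 5 n3 by presburger
    then have "LBf n < 2 * real n + 2"
    proof
      assume n5: "n = 5"
      define q where "q = sqrt (1-2*c) / (3 + (1-2*c))"
      have Lq: "LBf n = 12 * real n * q" unfolding L q_def by simp
      have "q < 0.18936" unfolding q_def using cB 5 n5 by (intro bound_small) auto
      then show ?thesis using Lq n5 by simp
    next
      assume "11 \<le> n"
      then show ?thesis unfolding L using cB 5 by (intro bound_odd) auto
    qed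
    then show ?thesis using m3 by simp
  qed
qed

lemma LB4: "LBf 4 = 12"
proof -
  have c: "\<lceil>real 4 / 6\<rceil> = (1::int)" using ceil6[of 4] by simp
  have "cos (2 * pi * 1 / 4) = 0" by simp
  then show ?thesis unfolding LBf_def c by simp
qed

lemma E4: "(\<Sum>j<4. hh (cos (2*pi*real j/real 4))) = 12"
proof -
  have c3: "cos (pi/2 + pi) = 0" unfolding cos_add by simp
  have e1: "pi * 3 / 2 = pi/2 + pi" "3 * pi / 2 = pi/2 + pi" by simp_all
  have c4: "cos (pi * 3 / 2) = 0" "cos (3 * pi / 2) = 0" unfolding e1 by (rule c3)+
  show ?thesis by (simp add: numeral_eq_Suc hh_def c4)
qed

theorem mainTheorem18:
  fixes n :: nat
  assumes "n \<ge> 3"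
  defines "EG \<equiv> graph_energy (2 * n) (prism_edge n)"
      and "QEG \<equiv> signless_laplacian_energy (2 * n) (prism_edge n)"
      and "LB \<equiv>
        (if n mod 3 = 0 then 2 * real n
         else if n mod 6 = 1 \<or> n mod 6 = 2 then
           6 * real n * sqrt (2 * cos (2 * pi * real (n div 6) / real n) - 1)
             / (1 + cos (2 * pi * real (n div 6) / real n))
         else
           6 * real n * sqrt (1 - 2 * cos (2 * pi * of_int \<lceil>real n / 6\<rceil> / real n))
             / (2 - cos (2 * pi * of_int \<lceil>real n / 6\<rceil> / real n)))"
  shows "3 + sqrt (3 * (2 * real n - 1) * (2 * real n - 3)) > EG
         \<and> EG = QEG \<and> EG \<ge> LB \<and> (EG = LB \<longleftrightarrow> n = 4)"
proof -
  have n3: "3 \<le> n" using assms(1) by simp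
  have np: "0 < n" using n3 by simp
  have EGs: "EG = (\<Sum>c\<in>{0..<2*n}. \<bar>mu n c\<bar>)" unfolding EG_def by (rule EG_mu[OF n3])
  have QQ: "QEG = EG" unfolding QEG_def EGs by (rule QE_mu[OF n3])
  have EE: "EG = (\<Sum>j<n. hh (cos (2*pi*real j/real n)))" unfolding EGs by (rule E_hh[OF np])
  have LBe: "LB = LBf n" unfolding LB_def LBf_def ..
  have up: "EG < 3 + sqrt (3 * (2 * real n - 1) * (2 * real n - 3))" unfolding EGs by (rule upper_bound[OF n3])
  have low: "EG \<ge> 2 * real n + 2 + (if even n then 2 else 0)" unfolding EE by (rule E_lower[OF n3])
  have k: "(n = 4 \<longrightarrow> EG = LB) \<and> (n \<noteq> 4 \<longrightarrow> LB < EG)"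
  proof (intro conjI impI)
    assume n4: "n = 4"
    show "EG = LB" unfolding EE LBe n4 LB4 E4 ..
  next
    assume n4: "n \<noteq> 4"
    show "LB < EG" unfolding LBe using key_less[OF n3 n4] low by linarith
  qed
  show ?thesis using up QQ k by auto
qed


end
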